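(* Let $\Omega\subset\mathbb{R}^d$, $d\in\{2,3\}$, be a bounded Lipschitz polyhedral domain, $\mu>0$, $\lambda\in[0,\infty]$. Consider the strongly symmetric discretization: finite-dimensional $\Sigma_h^{\mathrm{sym}}\subset\Sigma^{\mathrm{sym}}$, $V_h\subset V$, and find $(\sigma_h,u_h)\in\Sigma_h^{\mathrm{sym}}\times V_h$ with $$a(\sigma_h,\tau_h)+b(\tau_h,u_h)=\langle\tau_h n,g\rangle_{\partial\Omega}+(F,\tau_h)_{L^2(\Omega)}\ \forall\tau_h\in\Sigma_h^{\mathrm{sym}},\qquad b(\sigma_h,v_h)=(f,v_h)_{L^2(\Omega)}\ \forall v_h\in V_h,$$ and the weakly symmetric discretization: finite-dimensional $\Sigma_h\subset\Sigma$, $V_h\subset V$, $\Xi_h\subset\Xi$, and find $(\sigma_h,u_h,\omega_h)\in\Sigma_h\times V_h\times\Xi_h$ with $$a(\sigma_h,\tau_h)+b(\tau_h,u_h)+c(\tau_h,\omega_h)=\langle\tau_h n,g\rangle_{\partial\Omega}+(F,\tau_h)_{L^2(\Omega)}\ \forall\tau_h\in\Sigma_h,$$ $$b(\sigma_h,v_h)=(f,v_h)_{L^2(\Omega)}\ \forall v_h\in V_h,\qquad c(\sigma_h,\xi_h)=0\ \forall\xi_h\in\Xi_h.$$ Assume each discretization satisfies the discrete Babuška–Brezzi conditions (discrete kernel coercivity of $a$ and discrete inf-sup condition), so it is uniquely solvable. If the strongly symmetric discretization satisfies $$\{\tau_h\in\Sigma_h^{\mathrm{sym}}:(\nabla\cdot\tau_h,v_h)_{L^2(\Omega)}=0\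 \forall v_h\in V_h\}\subset\{\tau\in\Sigma^{\mathrm{sym}}:\nabla\cdot\tau\equiv 0\},$$ then it is material robust. Similarly, if the weakly symmetric discretization satisfies $$\{\tau_h\in\Sigma_h:(\nabla\cdot\tau_h,v_h)_{L^2(\Omega)}+(\tau_h,\xi_h)_{L^2(\Omega)}=0\ \forall v_h\in V_h,\ \forall\xi_h\in\Xi_h\}\subset\{\tau\in\Sigma^{\mathrm{sym}}:\nabla\cdot\tau\equiv 0\},$$ then it is material robust.
   Context: Data: $f\in L^2(\Omega;\mathbb{R}^d)$, $g\in H^{1/2}(\partial\Omega;\mathbb{R}^d)$, $F\in L^2(\Omega;\mathbb{R}^{d\times d}_{\mathrm{sym}})$ (when $\lambda=\infty$ also $\int_{\partial\Omega}g\cdot n\,ds=-\int_\Omega\operatorname{tr}F\,dx$). $\langle\cdot,\cdot\rangle_{\partial\Omega}$ is the $H^{-1/2}$–$H^{1/2}$ duality on $\partial\Omega$, $n$ the outward normal; divergence of a matrix is taken row-wise. $H(\mathrm{div};\Omega,\circ)$ is the space of $L^2$ matrix fields with values in $\circ$ whose divergence is in $L^2(\Omega;\mathbb{R}^d)$; $H_*(\mathrm{div};\Omega,\circ)$ is its subspace with $\int_\Omega\operatorname{tr}\tau\,dx=0$. Set $\Sigma^{\mathrm{sym}}=H(\mathrm{div};\Omega,\mathbb{R}^{d\times d}_{\mathrm{sym}})$ and $\Sigma=H(\mathrm{div};\Omega,\mathbb{R}^{d\times d})$ if $\lambda<\infty$, and the corresponding $H_*$ spaces if $\lambda=\infty$;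 $V=L^2(\Omega;\mathbb{R}^d)$; $\Xi=L^2(\Omega;\mathbb{R}^{d\times d}_{\mathrm{skew}})$ (skew-symmetric matrices). With $\tau^D:=\tau-\frac1d(\operatorname{tr}\tau)I$, $$a(\sigma,\tau)=\frac{1}{2\mu}(\sigma^D,\tau^D)_{L^2(\Omega)}+\frac{1}{d(2\mu+d\lambda)}(\operatorname{tr}\sigma,\operatorname{tr}\tau)_{L^2(\Omega)}$$ (second term absent when $\lambda=\infty$), $b(\sigma,v)=(\nabla\cdot\sigma,v)_{L^2(\Omega)}$, $c(\tau,\xi)=(\tau,\xi)_{L^2(\Omega)}$. The continuous strongly symmetric problem is: find $(\sigma,u)\in\Sigma^{\mathrm{sym}}\times V$ with $a(\sigma,\tau)+b(\tau,u)=\langle\tau n,g\rangle_{\partial\Omega}+(F,\tau)$ for all $\tau\in\Sigma^{\mathrm{sym}}$ and $b(\sigma,v)=(f,v)$ for all $v\in V$ (it is uniquely solvable, and equivalent in its $(\sigma,u)$ components to the analogous weakly symmetric continuous problem on $\Sigma\times V\times\Xi$). A discretization is called material robust if the approximation to any stress-free state is stress-free pointwise: whenever the data are such that the exact stress satisfies $\sigma\equiv 0$, the discrete stress satisfies $\sigma_h\equiv 0$. *)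

theory Defs
  imports "HOL-Analysis.Analysis"
begin

definition lipschitz_domain :: "(real^'d) set \<Rightarrow> bool" where
  "lipschitz_domain \<Omega> \<longleftrightarrow> open \<Omega> \<and> connected \<Omega> \<and> bounded \<Omega> \<and> \<Omega> \<noteq> {} \<and>
     (\<forall>x\<in>frontier \<Omega>. \<exists>(e::real^'d) r (\<phi>::real^'d \<Rightarrow> real) C.
        norm e = 1 \<and> r > 0 \<and> C-lipschitz_on {y. y \<bullet> e = 0} \<phi> \<and>
        \<Omega> \<inter> ball x r = {y \<in> ball x r. (y - x) \<bullet> e < \<phi> ((y - x) - ((y - x) \<bullet> e) *\<^sub>R e)})"

definition polyhedral_domain :: "(real^'d) set \<Rightarrow> bool" where
  "polyhedral_domain \<Omega> \<longleftrightarrow> (\<exists>P. finite P \<and> (\<forall>p\<in>P. polytope p) \<and> closure \<Omega> = \<Union>P)"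

definition L2 :: "(real^'d) set \<Rightarrow> (real^'d \<Rightarrow> 'b::euclidean_space) set" where
  "L2 \<Omega> = {f. f \<in> borel_measurable (lebesgue_on \<Omega>) \<and>
                integrable (lebesgue_on \<Omega>) (\<lambda>x. (norm (f x))\<^sup>2)}"

definition L2ip :: "(real^'d) set \<Rightarrow> (real^'d \<Rightarrow> 'b::euclidean_space) \<Rightarrow> (real^'d \<Rightarrow> 'b) \<Rightarrow> real" where
  "L2ip \<Omega> f g = (LINT x|lebesgue_on \<Omega>. f x \<bullet> g x)"

definition L2norm :: "(real^'d) set \<Rightarrow> (real^'d \<Rightarrow> 'b::euclidean_space) \<Rightarrow> real" where
  "L2norm \<Omega> f = sqrt (L2ip \<Omega> f f)"

fun iter_pd :: "'d list \<Rightarrow> (real^'d \<Rightarrow> real) \<Rightarrow> (real^'d \<Rightarrow> real)" where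
  "iter_pd [] \<phi> = \<phi>"
| "iter_pd (j # js) \<phi> = (\<lambda>x. frechet_derivative (iter_pd js \<phi>) (at x) (axis j 1))"

definition pd :: "'d \<Rightarrow> (real^'d \<Rightarrow> real) \<Rightarrow> (real^'d \<Rightarrow> real)" where
  "pd j \<phi> = iter_pd [j] \<phi>"

definition test_fun :: "(real^'d) set \<Rightarrow> (real^'d \<Rightarrow> real) \<Rightarrow> bool" where
  "test_fun \<Omega> \<phi> \<longleftrightarrow> (\<forall>js x. iter_pd js \<phi> differentiable (at x)) \<and>
      compact (closure {x. \<phi> x \<noteq> 0}) \<and> closure {x. \<phi> x \<noteq> 0} \<subseteq> \<Omega>"

text \<open>Weak (row-wise) divergence of a matrix field, weak gradient of a vector field
  (convention: (grad G) i j = partial_j G_i).\<close>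
definition is_wdiv :: "(real^'d) set \<Rightarrow> (real^'d \<Rightarrow> real^'d^'d) \<Rightarrow> (real^'d \<Rightarrow> real^'d) \<Rightarrow> bool" where
  "is_wdiv \<Omega> \<sigma> w \<longleftrightarrow> (\<forall>\<phi>. test_fun \<Omega> \<phi> \<longrightarrow> (\<forall>i.
      (LINT x|lebesgue_on \<Omega>. (\<Sum>j\<in>UNIV. \<sigma> x $ i $ j * pd j \<phi> x)) =
      - (LINT x|lebesgue_on \<Omega>. w x $ i * \<phi> x)))"

definition is_wgrad :: "(real^'d) set \<Rightarrow> (real^'d \<Rightarrow> real^'d) \<Rightarrow> (real^'d \<Rightarrow> real^'d^'d) \<Rightarrow> bool" where
  "is_wgrad \<Omega> G D \<longleftrightarrow> (\<forall>\<phi>. test_fun \<Omega> \<phi> \<longrightarrow> (\<forall>i j.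
      (LINT x|lebesgue_on \<Omega>. G x $ i * pd j \<phi> x) =
      - (LINT x|lebesgue_on \<Omega>. D x $ i $ j * \<phi> x)))"

definition Hdiv :: "(real^'d) set \<Rightarrow> (real^'d \<Rightarrow> real^'d^'d) set" where
  "Hdiv \<Omega> = {\<sigma> \<in> L2 \<Omega>. \<exists>w \<in> L2 \<Omega>. is_wdiv \<Omega> \<sigma> w}"

definition wdiv :: "(real^'d) set \<Rightarrow> (real^'d \<Rightarrow> real^'d^'d) \<Rightarrow> (real^'d \<Rightarrow> real^'d)" where
  "wdiv \<Omega> \<sigma> = (SOME w. w \<in> L2 \<Omega> \<and> is_wdiv \<Omega> \<sigma> w)"

definition H1 :: "(real^'d) set \<Rightarrow> (real^'d \<Rightarrow> real^'d) set" where
  "H1 \<Omega> = {G \<in> L2 \<Omega>. \<exists>D \<in> L2 \<Omega>. is_wgrad \<Omega> G D}"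

definition wgrad :: "(real^'d) set \<Rightarrow> (real^'d \<Rightarrow> real^'d) \<Rightarrow> (real^'d \<Rightarrow> real^'d^'d)" where
  "wgrad \<Omega> G = (SOME D. D \<in> L2 \<Omega> \<and> is_wgrad \<Omega> G D)"

definition hdiv_norm :: "(real^'d) set \<Rightarrow> (real^'d \<Rightarrow> real^'d^'d) \<Rightarrow> real" where
  "hdiv_norm \<Omega> \<tau> = sqrt (L2ip \<Omega> \<tau> \<tau> + L2ip \<Omega> (wdiv \<Omega> \<tau>) (wdiv \<Omega> \<tau>))"

definition Sigma_full :: "(real^'d) set \<Rightarrow> ereal \<Rightarrow> (real^'d \<Rightarrow> real^'d^'d) set" where
  "Sigma_full \<Omega> lam = {\<tau> \<in> Hdiv \<Omega>.
      lam = \<infinity> \<longrightarrow> (LINT x|lebesgue_on \<Omega>. trace (\<tau> x)) = 0}"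

definition Sigma_sym :: "(real^'d) set \<Rightarrow> ereal \<Rightarrow> (real^'d \<Rightarrow> real^'d^'d) set" where
  "Sigma_sym \<Omega> lam = {\<tau> \<in> Sigma_full \<Omega> lam.
      AE x in lebesgue_on \<Omega>. transpose (\<tau> x) = \<tau> x}"

definition Xi :: "(real^'d) set \<Rightarrow> (real^'d \<Rightarrow> real^'d^'d) set" where
  "Xi \<Omega> = {\<xi> \<in> L2 \<Omega>. AE x in lebesgue_on \<Omega>. transpose (\<xi> x) = - \<xi> x}"

definition fin_dim_space :: "('a \<Rightarrow> 'b::real_vector) set \<Rightarrow> bool" where
  "fin_dim_space S \<longleftrightarrow> (\<exists>B. finite B \<and> S = {(\<lambda>x. \<Sum>b\<in>B. c b *\<^sub>R b x) | c. True})"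

definition dev :: "real^'d^'d \<Rightarrow> real^'d^'d" where
  "dev M = M - (trace M / real CARD('d)) *\<^sub>R mat 1"

definition a_form :: "(real^'d) set \<Rightarrow> real \<Rightarrow> ereal \<Rightarrow>
    (real^'d \<Rightarrow> real^'d^'d) \<Rightarrow> (real^'d \<Rightarrow> real^'d^'d) \<Rightarrow> real" where
  "a_form \<Omega> \<mu> lam \<sigma> \<tau> =
     1 / (2 * \<mu>) * L2ip \<Omega> (\<lambda>x. dev (\<sigma> x)) (\<lambda>x. dev (\<tau> x)) +
     (if lam = \<infinity> then 0
      else 1 / (real CARD('d) * (2 * \<mu> + real CARD('d) * real_of_ereal lam)) *
           (LINT x|lebesgue_on \<Omega>. trace (\<sigma> x) * trace (\<tau> x)))"

definition b_form :: "(real^'d) set \<Rightarrow> (real^'d \<Rightarrow> real^'d^'d) \<Rightarrow> (real^'d \<Rightarrow> real^'d) \<Rightarrow> real" where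
  "b_form \<Omega> \<sigma> v = L2ip \<Omega> (wdiv \<Omega> \<sigma>) v"

definition c_form :: "(real^'d) set \<Rightarrow> (real^'d \<Rightarrow> real^'d^'d) \<Rightarrow> (real^'d \<Rightarrow> real^'d^'d) \<Rightarrow> real" where
  "c_form \<Omega> \<tau> \<xi> = L2ip \<Omega> \<tau> \<xi>"

text \<open>Boundary duality pairing <tau n, g> where g is the trace of G in H1:
  defined through Green's formula  (div tau, G) + (tau, grad G).\<close>
definition bdry_pair :: "(real^'d) set \<Rightarrow> (real^'d \<Rightarrow> real^'d^'d) \<Rightarrow> (real^'d \<Rightarrow> real^'d) \<Rightarrow> real" where
  "bdry_pair \<Omega> \<tau> G = L2ip \<Omega> (wdiv \<Omega> \<tau>) G + L2ip \<Omega> \<tau> (wgrad \<Omega> G)"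

definition data_ok :: "(real^'d) set \<Rightarrow> ereal \<Rightarrow> (real^'d \<Rightarrow> real^'d) \<Rightarrow>
    (real^'d \<Rightarrow> real^'d) \<Rightarrow> (real^'d \<Rightarrow> real^'d^'d) \<Rightarrow> bool" where
  "data_ok \<Omega> lam f G F \<longleftrightarrow> f \<in> L2 \<Omega> \<and> G \<in> H1 \<Omega> \<and> F \<in> L2 \<Omega> \<and>
     (AE x in lebesgue_on \<Omega>. transpose (F x) = F x) \<and>
     (lam = \<infinity> \<longrightarrow> (LINT x|lebesgue_on \<Omega>. trace (wgrad \<Omega> G x)) =
                     - (LINT x|lebesgue_on \<Omega>. trace (F x)))"

definition cont_solves :: "(real^'d) set \<Rightarrow> real \<Rightarrow> ereal \<Rightarrow> (real^'d \<Rightarrow> real^'d) \<Rightarrow>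
    (real^'d \<Rightarrow> real^'d) \<Rightarrow> (real^'d \<Rightarrow> real^'d^'d) \<Rightarrow>
    (real^'d \<Rightarrow> real^'d^'d) \<Rightarrow> (real^'d \<Rightarrow> real^'d) \<Rightarrow> bool" where
  "cont_solves \<Omega> \<mu> lam f G F \<sigma> u \<longleftrightarrow> \<sigma> \<in> Sigma_sym \<Omega> lam \<and> u \<in> L2 \<Omega> \<and>
     (\<forall>\<tau> \<in> Sigma_sym \<Omega> lam. a_form \<Omega> \<mu> lam \<sigma> \<tau> + b_form \<Omega> \<tau> u =
                              bdry_pair \<Omega> \<tau> G + L2ip \<Omega> F \<tau>) \<and>
     (\<forall>v \<in> L2 \<Omega>. b_form \<Omega> \<sigma> v = L2ip \<Omega> f v)"

definition strong_disc_solves :: "(real^'d) set \<Rightarrow> real \<Rightarrow> ereal \<Rightarrow>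
    (real^'d \<Rightarrow> real^'d^'d) set \<Rightarrow> (real^'d \<Rightarrow> real^'d) set \<Rightarrow>
    (real^'d \<Rightarrow> real^'d) \<Rightarrow> (real^'d \<Rightarrow> real^'d) \<Rightarrow> (real^'d \<Rightarrow> real^'d^'d) \<Rightarrow>
    (real^'d \<Rightarrow> real^'d^'d) \<Rightarrow> (real^'d \<Rightarrow> real^'d) \<Rightarrow> bool" where
  "strong_disc_solves \<Omega> \<mu> lam Sh Vh f G F \<sigma>h uh \<longleftrightarrow> \<sigma>h \<in> Sh \<and> uh \<in> Vh \<and>
     (\<forall>\<tau> \<in> Sh. a_form \<Omega> \<mu> lam \<sigma>h \<tau> + b_form \<Omega> \<tau> uh = bdry_pair \<Omega> \<tau> G + L2ip \<Omega> F \<tau>) \<and>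
     (\<forall>v \<in> Vh. b_form \<Omega> \<sigma>h v = L2ip \<Omega> f v)"

definition weak_disc_solves :: "(real^'d) set \<Rightarrow> real \<Rightarrow> ereal \<Rightarrow>
    (real^'d \<Rightarrow> real^'d^'d) set \<Rightarrow> (real^'d \<Rightarrow> real^'d) set \<Rightarrow> (real^'d \<Rightarrow> real^'d^'d) set \<Rightarrow>
    (real^'d \<Rightarrow> real^'d) \<Rightarrow> (real^'d \<Rightarrow> real^'d) \<Rightarrow> (real^'d \<Rightarrow> real^'d^'d) \<Rightarrow>
    (real^'d \<Rightarrow> real^'d^'d) \<Rightarrow> (real^'d \<Rightarrow> real^'d) \<Rightarrow> (real^'d \<Rightarrow> real^'d^'d) \<Rightarrow> bool" where
  "weak_disc_solves \<Omega> \<mu> lam Sh Vh Xh f G F \<sigma>h uh \<omega>h \<longleftrightarrow> \<sigma>h \<in> Sh \<and> uh \<in> Vh \<and> \<omega>h \<in> Xh \<and>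
     (\<forall>\<tau> \<in> Sh. a_form \<Omega> \<mu> lam \<sigma>h \<tau> + b_form \<Omega> \<tau> uh + c_form \<Omega> \<tau> \<omega>h =
                 bdry_pair \<Omega> \<tau> G + L2ip \<Omega> F \<tau>) \<and>
     (\<forall>v \<in> Vh. b_form \<Omega> \<sigma>h v = L2ip \<Omega> f v) \<and>
     (\<forall>\<xi> \<in> Xh. c_form \<Omega> \<sigma>h \<xi> = 0)"

definition strong_BB :: "(real^'d) set \<Rightarrow> real \<Rightarrow> ereal \<Rightarrow>
    (real^'d \<Rightarrow> real^'d^'d) set \<Rightarrow> (real^'d \<Rightarrow> real^'d) set \<Rightarrow> bool" where
  "strong_BB \<Omega> \<mu> lam Sh Vh \<longleftrightarrow>
     (\<exists>\<alpha>>0. \<forall>\<tau>\<in>Sh. (\<forall>v\<in>Vh. b_form \<Omega> \<tau> v = 0) \<longrightarrow>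
                   a_form \<Omega> \<mu> lam \<tau> \<tau> \<ge> \<alpha> * (hdiv_norm \<Omega> \<tau>)\<^sup>2) \<and>
     (\<exists>\<beta>>0. \<forall>v\<in>Vh. L2norm \<Omega> v \<noteq> 0 \<longrightarrow>
        \<beta> \<le> (SUP \<tau>\<in>{\<tau>\<in>Sh. hdiv_norm \<Omega> \<tau> \<noteq> 0}. b_form \<Omega> \<tau> v / (hdiv_norm \<Omega> \<tau> * L2norm \<Omega> v)))"

definition weak_BB :: "(real^'d) set \<Rightarrow> real \<Rightarrow> ereal \<Rightarrow>
    (real^'d \<Rightarrow> real^'d^'d) set \<Rightarrow> (real^'d \<Rightarrow> real^'d) set \<Rightarrow> (real^'d \<Rightarrow> real^'d^'d) set \<Rightarrow> bool" where
  "weak_BB \<Omega> \<mu> lam Sh Vh Xh \<longleftrightarrow>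
     (\<exists>\<alpha>>0. \<forall>\<tau>\<in>Sh. (\<forall>v\<in>Vh. \<forall>\<xi>\<in>Xh. b_form \<Omega> \<tau> v + c_form \<Omega> \<tau> \<xi> = 0) \<longrightarrow>
                   a_form \<Omega> \<mu> lam \<tau> \<tau> \<ge> \<alpha> * (hdiv_norm \<Omega> \<tau>)\<^sup>2) \<and>
     (\<exists>\<beta>>0. \<forall>v\<in>Vh. \<forall>\<xi>\<in>Xh. (L2norm \<Omega> v)\<^sup>2 + (L2norm \<Omega> \<xi>)\<^sup>2 \<noteq> 0 \<longrightarrow>
        \<beta> \<le> (SUP \<tau>\<in>{\<tau>\<in>Sh. hdiv_norm \<Omega> \<tau> \<noteq> 0}.
               (b_form \<Omega> \<tau> v + c_form \<Omega> \<tau> \<xi>) /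
               (hdiv_norm \<Omega> \<tau> * sqrt ((L2norm \<Omega> v)\<^sup>2 + (L2norm \<Omega> \<xi>)\<^sup>2))))"

definition strong_material_robust :: "(real^'d) set \<Rightarrow> real \<Rightarrow> ereal \<Rightarrow>
    (real^'d \<Rightarrow> real^'d^'d) set \<Rightarrow> (real^'d \<Rightarrow> real^'d) set \<Rightarrow> bool" where
  "strong_material_robust \<Omega> \<mu> lam Sh Vh \<longleftrightarrow>
     (\<forall>f G F. data_ok \<Omega> lam f G F \<and> (\<exists>u. cont_solves \<Omega> \<mu> lam f G F (\<lambda>x. 0) u) \<longrightarrow>
        (\<forall>\<sigma>h uh. strong_disc_solves \<Omega> \<mu> lam Sh Vh f G F \<sigma>h uh \<longrightarrow>
                  (AE x in lebesgue_on \<Omega>. \<sigma>h x = 0)))"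

definition weak_material_robust :: "(real^'d) set \<Rightarrow> real \<Rightarrow> ereal \<Rightarrow>
    (real^'d \<Rightarrow> real^'d^'d) set \<Rightarrow> (real^'d \<Rightarrow> real^'d) set \<Rightarrow> (real^'d \<Rightarrow> real^'d^'d) set \<Rightarrow> bool" where
  "weak_material_robust \<Omega> \<mu> lam Sh Vh Xh \<longleftrightarrow>
     (\<forall>f G F. data_ok \<Omega> lam f G F \<and> (\<exists>u. cont_solves \<Omega> \<mu> lam f G F (\<lambda>x. 0) u) \<longrightarrow>
        (\<forall>\<sigma>h uh \<omega>h. weak_disc_solves \<Omega> \<mu> lam Sh Vh Xh f G F \<sigma>h uh \<omega>h \<longrightarrow>
                  (AE x in lebesgue_on \<Omega>. \<sigma>h x = 0)))"

end

theory Submission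
  imports Defs "HOL-Computational_Algebra.Polynomial"
begin

definition E1 :: "real poly \<Rightarrow> real \<Rightarrow> real" where
  "E1 p t = (if t > 0 then poly p (inverse t) * exp (- inverse t) else 0)"

definition Dp :: "real poly \<Rightarrow> real poly" where
  "Dp p = [:0,0,1:] * (p - pderiv p)"

lemma poly_div_exp_0: "((\<lambda>s. poly q s / exp s) \<longlongrightarrow> (0::real)) at_top"
proof -
  have "((\<lambda>s. \<Sum>i\<le>degree q. coeff q i * (s ^ i / exp s)) \<longlongrightarrow> (\<Sum>i\<le>degree q. coeff q i * 0)) at_top"
    by (intro tendsto_sum tendsto_mult tendsto_const tendsto_power_div_exp_0)
  then show ?thesis
    by (simp add: poly_altdef sum_divide_distrib)
qed

lemma E1_deriv_pos:
  assumes "t > 0"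
  shows "(E1 p has_real_derivative E1 (Dp p) t) (at t)"
proof -
  have "((\<lambda>s. poly p (inverse s) * exp (- inverse s)) has_real_derivative
     poly (pderiv p) (inverse t) * (- (inverse t ^ 2)) * exp (- inverse t)
       + poly p (inverse t) * (exp (- inverse t) * (inverse t ^ 2))) (at t)"
  proof -
    have d1: "((\<lambda>s. poly p (inverse s)) has_real_derivative poly (pderiv p) (inverse t) * (- (inverse t ^ 2))) (at t)"
      using DERIV_chain2[OF poly_DERIV DERIV_inverse, of t p] assms by (simp add: power2_eq_square)
    have d2: "((\<lambda>s. exp (- inverse s)) has_real_derivative exp (- inverse t) * (inverse t ^ 2)) (at t)"
      using DERIV_chain2[OF DERIV_exp DERIV_minus[OF DERIV_inverse], of t] assms by (simp add: power2_eq_square)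
    show ?thesis using DERIV_mult[OF d1 d2] by (simp add: algebra_simps)
  qed
  moreover have "poly (pderiv p) (inverse t) * (- (inverse t ^ 2)) * exp (- inverse t)
       + poly p (inverse t) * (exp (- inverse t) * (inverse t ^ 2)) = E1 (Dp p) t"
    using assms by (simp add: E1_def Dp_def algebra_simps power2_eq_square)
  ultimately have "((\<lambda>s. poly p (inverse s) * exp (- inverse s)) has_real_derivative E1 (Dp p) t) (at t)"
    by simp
  then show ?thesis
    by (rule has_field_derivative_transform_within_open[where S="{0<..}"]) (use assms in \<open>auto simp: E1_def\<close>)
qed

lemma E1_deriv_neg:
  assumes "t < 0"
  shows "(E1 p has_real_derivative E1 (Dp p) t) (at t)"
proof -
  have "((\<lambda>s. 0) has_real_derivative 0) (at t)" by simp
  then have "(E1 p has_real_derivative 0) (at t)"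
    by (rule has_field_derivative_transform_within_open[where S="{..<0}"]) (use assms in \<open>auto simp: E1_def\<close>)
  then show ?thesis using assms by (simp add: E1_def)
qed

lemma E1_deriv_0:
  shows "(E1 p has_real_derivative E1 (Dp p) 0) (at 0)"
proof -
  have L: "((\<lambda>y. E1 p y / y) \<longlongrightarrow> 0) (at_left 0)"
  proof (rule Lim_transform_eventually[OF tendsto_const])
    have "\<forall>\<^sub>F x in at_left (0::real). x < 0" by (simp add: eventually_at_filter)
    then show "\<forall>\<^sub>F x in at_left 0. 0 = E1 p x / x"
      by eventually_elim (simp add: E1_def)
  qed
  have R: "((\<lambda>y. E1 p y / y) \<longlongrightarrow> 0) (at_right 0)"
    unfolding filterlim_at_right_to_top
  proof (rule Lim_transform_eventually[OF poly_div_exp_0[of "p * [:0,1:]"]])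
    show "\<forall>\<^sub>F x in at_top. poly (p * [:0, 1:]) x / exp x = E1 p (inverse x) / inverse x"
      using eventually_gt_at_top[of 0]
      by eventually_elim (auto simp: E1_def exp_minus field_simps)
  qed
  have "((\<lambda>y. (E1 p y - E1 p 0) / (y - 0)) \<longlongrightarrow> 0) (at 0)"
    using filterlim_split_at[OF L R] by (simp add: E1_def)
  then show ?thesis
    by (simp add: has_field_derivative_iff E1_def)
qed

lemma E1_deriv: "(E1 p has_real_derivative E1 (Dp p) t) (at t)"
  using E1_deriv_pos E1_deriv_neg E1_deriv_0 by (metis linorder_neqE_linordered_idom)

definition smooth1 :: "(real \<Rightarrow> real) \<Rightarrow> bool" where
  "smooth1 f \<longleftrightarrow> (\<exists>F. F 0 = f \<and> (\<forall>k t. (F k has_real_derivative F (Suc k) t) (at t)))"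

lemma smooth1_E1: "smooth1 (E1 1)"
  unfolding smooth1_def
  by (rule exI[of _ "\<lambda>k. E1 ((Dp ^^ k) 1)"]) (auto intro: E1_deriv)

lemma smooth1_affine:
  assumes "smooth1 f"
  shows "smooth1 (\<lambda>t. f (c * t + e))"
proof -
  obtain F where F0: "F 0 = f" and F: "\<And>k t. (F k has_real_derivative F (Suc k) t) (at t)"
    using assms unfolding smooth1_def by blast
  show ?thesis unfolding smooth1_def
  proof (intro exI[of _ "\<lambda>k t. c ^ k * F k (c * t + e)"] conjI allI)
    show "(\<lambda>t. c ^ 0 * F 0 (c * t + e)) = (\<lambda>t. f (c * t + e))" by (simp add: F0)
    fix k t
    have "((\<lambda>t. F k (c * t + e)) has_real_derivative F (Suc k) (c * t + e) * c) (at t)"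
      by (rule DERIV_chain2[OF F]) (auto intro!: derivative_eq_intros)
    then show "((\<lambda>t. c ^ k * F k (c * t + e)) has_real_derivative c ^ Suc k * F (Suc k) (c * t + e)) (at t)"
      by (auto intro!: derivative_eq_intros simp: algebra_simps)
  qed
qed

lemma Suc_choose': "Suc n choose k = (n choose k) + (if k = 0 then 0 else (n choose (k-1)))"
  by (cases k) simp_all

lemma smooth1_mult:
  assumes "smooth1 f" "smooth1 g"
  shows "smooth1 (\<lambda>t. f t * g t)"
proof -
  obtain F where F0: "F 0 = f" and F: "\<And>k t. (F k has_real_derivative F (Suc k) t) (at t)"
    using assms unfolding smooth1_def by blast
  obtain G where G0: "G 0 = g" and G: "\<And>k t. (G k has_real_derivative G (Suc k) t) (at t)"
    using assms unfolding smooth1_def by blast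
  define H where "H n t = (\<Sum>i = 0..n. of_nat (n choose i) * F i t * G (n-i) t)" for n t
  show ?thesis unfolding smooth1_def
  proof (intro exI[of _ H] conjI allI)
    show "H 0 = (\<lambda>t. f t * g t)" by (simp add: H_def F0 G0 fun_eq_iff)
    fix n t
    have sumeq: "(\<Sum>i = 0..n.
               of_nat (n choose i) * (F (Suc i) t * G (n-i) t + G (Suc (n-i)) t * F i t)) =
            G 0 t * F (Suc n) t + (\<Sum>i = 0..n. F i t * (of_nat (Suc n choose i) * G (Suc n - i) t))"
      apply (simp add: Suc_choose' algebra_simps sum.distrib)
      apply (subst (4) sum_Suc_reindex)
      apply (auto simp: algebra_simps Suc_diff_le intro: sum.cong)
      done
    have "(H n has_real_derivative (\<Sum>i = 0..n.
               of_nat (n choose i) * (F (Suc i) t * G (n-i) t + G (Suc (n-i)) t * F i t))) (at t)"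
      unfolding H_def
      by (rule derivative_eq_intros F G refl | simp add: algebra_simps)+
    moreover have "H (Suc n) t = G 0 t * F (Suc n) t + (\<Sum>i = 0..n. F i t * (of_nat (Suc n choose i) * G (Suc n - i) t))"
      unfolding H_def by (simp add: algebra_simps)
    ultimately show "(H n has_real_derivative H (Suc n) t) (at t)"
      using sumeq by simp
  qed
qed

lemma vec_nth_has_derivative: "((\<lambda>x::real^'n. x $ j) has_derivative (\<lambda>v. v $ j)) F"
  by (rule bounded_linear_imp_has_derivative) (rule bounded_linear_vec_nth)

lemma comp_nth_deriv:
  assumes "(g has_real_derivative D) (at (x $ j))"
  shows "((\<lambda>x::real^'n. g (x $ j)) has_derivative (\<lambda>v. D * v $ j)) (at x)"
proof -
  have "(g has_derivative (*) D) (at (x $ j))"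
    using assms by (simp add: has_field_derivative_def)
  from diff_chain_at[OF vec_nth_has_derivative this]
  show ?thesis by (simp add: o_def)
qed

definition prodfun :: "('d \<Rightarrow> nat \<Rightarrow> real \<Rightarrow> real) \<Rightarrow> ('d \<Rightarrow> nat) \<Rightarrow> real^'d \<Rightarrow> real" where
  "prodfun H m = (\<lambda>x. \<Prod>j\<in>UNIV. H j (m j) (x $ j))"

lemma prodfun_deriv:
  assumes H: "\<And>j k t. (H j k has_real_derivative H j (Suc k) t) (at t)"
  shows "(prodfun H m has_derivative
     (\<lambda>v. \<Sum>j\<in>UNIV. (H j (Suc (m j)) (x $ j) * v $ j) * (\<Prod>l\<in>UNIV - {j}. H l (m l) (x $ l)))) (at x)"
  unfolding prodfun_def
  by (rule has_derivative_prod) (rule comp_nth_deriv[OF H])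

lemma iter_pd_prodfun:
  assumes H: "\<And>j k t. (H j k has_real_derivative H j (Suc k) t) (at t)"
  shows "iter_pd js (prodfun H (\<lambda>j. 0)) = prodfun H (\<lambda>j. count_list js j)"
proof (induction js)
  case Nil
  then show ?case by simp
next
  case (Cons i js)
  let ?m = "\<lambda>j. count_list js j"
  have "iter_pd (i # js) (prodfun H (\<lambda>j. 0)) =
     (\<lambda>x. frechet_derivative (prodfun H ?m) (at x) (axis i 1))"
    using Cons by simp
  also have "\<dots> = (\<lambda>x. \<Sum>j\<in>UNIV. (H j (Suc (?m j)) (x $ j) * axis i 1 $ j) * (\<Prod>l\<in>UNIV - {j}. H l (?m l) (x $ l)))"
    by (rule ext) (simp add: frechet_derivative_at[OF prodfun_deriv[where H=H, OF H], symmetric])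
  also have "\<dots> = (\<lambda>x. H i (Suc (?m i)) (x $ i) * (\<Prod>l\<in>UNIV - {i}. H l (?m l) (x $ l)))"
    by (rule ext, subst sum.remove[of UNIV i], auto simp: axis_def)
  also have "\<dots> = prodfun H (\<lambda>j. count_list (i # js) j)"
  proof (rule ext)
    fix x :: "real^'a"
    have "prodfun H (\<lambda>j. count_list (i # js) j) x =
        H i (Suc (?m i)) (x $ i) * (\<Prod>l\<in>UNIV - {i}. H l (count_list (i # js) l) (x $ l))"
      unfolding prodfun_def by (subst prod.remove[of UNIV i]) auto
    also have "(\<Prod>l\<in>UNIV - {i}. H l (count_list (i # js) l) (x $ l)) = (\<Prod>l\<in>UNIV - {i}. H l (?m l) (x $ l))"
      by (rule prod.cong) auto
    finally show "H i (Suc (?m i)) (x $ i) * (\<Prod>l\<in>UNIV - {i}. H l (?m l) (x $ l)) = prodfun H (\<lambda>j. count_list (i # js) j) x"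
      by simp
  qed
  finally show ?case .
qed

lemma smooth_prod_differentiable:
  assumes "\<And>j. smooth1 (h j)"
  shows "iter_pd js (\<lambda>x::real^'d. \<Prod>j\<in>UNIV. h j (x $ j)) differentiable (at x)"
proof -
  have "\<forall>j. \<exists>F. F 0 = h j \<and> (\<forall>k t. (F k has_real_derivative F (Suc k) t) (at t))"
    using assms unfolding smooth1_def by blast
  then obtain H where H0: "\<And>j. H j 0 = h j" and H: "\<And>j k t. (H j k has_real_derivative H j (Suc k) t) (at t)"
    by metis
  have eq: "(\<lambda>x::real^'d. \<Prod>j\<in>UNIV. h j (x $ j)) = prodfun H (\<lambda>j. 0)"
    by (simp add: prodfun_def H0)
  show ?thesis
    unfolding eq iter_pd_prodfun[where H=H, OF H]
    using prodfun_deriv[where H=H, OF H] by (auto simp: differentiable_def)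
qed

lemma E1_1: "E1 1 t = (if t > 0 then exp (- inverse t) else 0)"
  by (simp add: E1_def)

lemma E1_1_bounds: "0 \<le> E1 1 t" "E1 1 t \<le> 1"
  by (auto simp: E1_1)

lemma E1_1_nz: "E1 1 t \<noteq> 0 \<longleftrightarrow> t > 0"
  by (auto simp: E1_1)

definition bumpf :: "nat \<Rightarrow> real^'d \<Rightarrow> real^'d \<Rightarrow> real^'d \<Rightarrow> real" where
  "bumpf n a b = (\<lambda>x. \<Prod>j\<in>UNIV. E1 1 (real (Suc n) * x$j + - real (Suc n) * a$j) *
                                 E1 1 (- real (Suc n) * x$j + real (Suc n) * b$j))"

lemma bumpf_bounds: "0 \<le> bumpf n a b x" "bumpf n a b x \<le> 1"
  unfolding bumpf_def
  by (auto intro!: prod_nonneg prod_le_1 mult_nonneg_nonneg mult_le_one E1_1_bounds)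

lemma bumpf_nz: "bumpf n a b x \<noteq> 0 \<Longrightarrow> x \<in> box a b"
proof -
  assume "bumpf n a b x \<noteq> 0"
  then have "\<forall>j. E1 1 (real (Suc n) * x$j + - real (Suc n) * a$j) \<noteq> 0 \<and>
                 E1 1 (- real (Suc n) * x$j + real (Suc n) * b$j) \<noteq> 0"
    unfolding bumpf_def by auto
  then have "\<forall>j. 0 < real (Suc n) * (x$j - a$j) \<and> 0 < real (Suc n) * (b$j - x$j)"
    unfolding E1_1_nz by (simp add: algebra_simps)
  then show "x \<in> box a b"
    by (auto simp: mem_box_cart zero_less_mult_iff)
qed

lemma E1_1_lim:
  assumes "t > 0"
  shows "(\<lambda>n. E1 1 (real (Suc n) * t)) \<longlonglongrightarrow> 1"
proof -
  have "(\<lambda>n. inverse (real (Suc n)) * inverse t) \<longlonglongrightarrow> 0 * inverse t"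
    by (intro tendsto_mult tendsto_const LIMSEQ_inverse_real_of_nat)
  then have "(\<lambda>n. exp (- (inverse (real (Suc n)) * inverse t))) \<longlonglongrightarrow> exp (- (0 * inverse t))"
    by (intro tendsto_exp tendsto_minus)
  moreover have "E1 1 (real (Suc n) * t) = exp (- (inverse (real (Suc n)) * inverse t))" for n
    using assms by (simp add: E1_1 mult_pos_pos)
  ultimately show ?thesis by simp
qed

lemma bumpf_lim: "(\<lambda>n. bumpf n a b x) \<longlonglongrightarrow> indicator (box a b) x"
proof (cases "x \<in> box a b")
  case True
  then have ab: "\<And>j. a$j < x$j \<and> x$j < b$j" by (auto simp: mem_box_cart)
  have "(\<lambda>n. \<Prod>j\<in>UNIV. E1 1 (real (Suc n) * (x$j - a$j)) * E1 1 (real (Suc n) * (b$j - x$j)))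
        \<longlonglongrightarrow> (\<Prod>j\<in>(UNIV::'a set). 1 * 1)"
    using ab by (intro tendsto_prod tendsto_mult E1_1_lim) auto
  moreover have "bumpf n a b x = (\<Prod>j\<in>UNIV. E1 1 (real (Suc n) * (x$j - a$j)) * E1 1 (real (Suc n) * (b$j - x$j)))" for n
    unfolding bumpf_def by (intro prod.cong refl arg_cong2[where f="(*)"] arg_cong[where f="E1 1"]) (simp_all add: algebra_simps)
  ultimately show ?thesis using True
    by simp
next
  case False
  have "bumpf n a b x = 0" for n using bumpf_nz False by blast
  then show ?thesis using False by simp
qed

lemma bumpf_test:
  assumes "cbox a b \<subseteq> \<Omega>"
  shows "test_fun \<Omega> (bumpf n a b)"
  unfolding test_fun_def
proof (intro conjI allI)
  fix js x
  show "iter_pd js (bumpf n a b) differentiable at x"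
    unfolding bumpf_def
    by (rule smooth_prod_differentiable)
      (intro smooth1_mult smooth1_affine smooth1_E1)
  have sub: "closure {x. bumpf n a b x \<noteq> 0} \<subseteq> cbox a b"
  proof (rule closure_minimal)
    show "{x. bumpf n a b x \<noteq> 0} \<subseteq> cbox a b"
      using bumpf_nz box_subset_cbox by blast
  qed (rule closed_cbox)
  show "compact (closure {x. bumpf n a b x \<noteq> 0})"
    using sub by (meson bounded_cbox bounded_subset compact_closure closure_subset order_trans)
  show "closure {x. bumpf n a b x \<noteq> 0} \<subseteq> \<Omega>"
    using sub assms by blast
qed

lemma bumpf_cont: "continuous_on UNIV (bumpf n a b)"
proof -
  have "\<And>x. bumpf n a b differentiable at x"
  proof -
    fix x
    have "iter_pd [] (bumpf n a b) differentiable at x"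
      using bumpf_test[of a b UNIV n] unfolding test_fun_def by blast
    then show "bumpf n a b differentiable at x" by simp
  qed
  then show ?thesis
    by (simp add: differentiable_imp_continuous_on differentiable_on_def)
qed

lemma box_integral_zero:
  fixes g :: "real^'d \<Rightarrow> real"
  assumes Om: "\<Omega> \<in> sets lebesgue"
    and g: "integrable (lebesgue_on \<Omega>) g"
    and T: "\<And>\<phi>. test_fun \<Omega> \<phi> \<Longrightarrow> (LINT x|lebesgue_on \<Omega>. g x * \<phi> x) = 0"
    and ab: "cbox a b \<subseteq> \<Omega>"
  shows "(LINT x|lebesgue_on \<Omega>. g x * indicator (box a b) x) = 0"
proof -
  have gm: "g \<in> borel_measurable (lebesgue_on \<Omega>)"
    using g by (rule borel_measurable_integrable)
  have bm: "bumpf n a b \<in> borel_measurable (lebesgue_on \<Omega>)" for n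
    using bumpf_cont by (intro continuous_imp_measurable_on_sets_lebesgue Om) (auto intro: continuous_on_subset)
  have "(\<lambda>n. LINT x|lebesgue_on \<Omega>. g x * bumpf n a b x) \<longlonglongrightarrow> (LINT x|lebesgue_on \<Omega>. g x * indicator (box a b) x)"
  proof (rule integral_dominated_convergence[where w="\<lambda>x. norm (g x)"])
    show "(\<lambda>x. g x * indicator (box a b) x) \<in> borel_measurable (lebesgue_on \<Omega>)"
    proof -
      have ind: "indicator (box a b) \<in> borel_measurable (lebesgue_on \<Omega>)"
        by (intro measurable_restrict_space1 borel_measurable_indicator fmeasurableD lmeasurable_box)
      show ?thesis by (rule borel_measurable_times[OF gm ind])
    qed
    show "(\<lambda>x. g x * bumpf n a b x) \<in> borel_measurable (lebesgue_on \<Omega>)" for n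
      using gm bm by (intro borel_measurable_times)
    show "integrable (lebesgue_on \<Omega>) (\<lambda>x. norm (g x))"
      using g by simp
    show "AE x in lebesgue_on \<Omega>. (\<lambda>n. g x * bumpf n a b x) \<longlonglongrightarrow> g x * indicator (box a b) x"
      by (intro AE_I2 tendsto_mult tendsto_const bumpf_lim)
    show "AE x in lebesgue_on \<Omega>. norm (g x * bumpf n a b x) \<le> norm (g x)" for n
      using bumpf_bounds[of n a b] by (intro AE_I2) (auto simp: abs_mult intro: mult_left_le)
  qed
  moreover have "(\<lambda>n. LINT x|lebesgue_on \<Omega>. g x * bumpf n a b x) = (\<lambda>n. 0)"
    by (rule ext, rule T, rule bumpf_test[OF ab])
  ultimately have "(\<lambda>n. 0::real) \<longlonglongrightarrow> (LINT x|lebesgue_on \<Omega>. g x * indicator (box a b) x)"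
    by simp
  then show ?thesis
    by (simp add: LIMSEQ_const_iff)
qed

lemma ennreal_ind: "ennreal r * indicator A x = ennreal (r * indicator A x)"
  by (auto split: split_indicator)

lemma ennreal_ind2: "ennreal (- r) * indicator A x = ennreal (- (r * indicator A x))"
  by (auto split: split_indicator)

lemma ennreal_pm: "ennreal a = ennreal (- a) \<Longrightarrow> a = 0"
  by (cases "a \<ge> 0") (auto simp: ennreal_neg)

lemma boxes_ae_zero:
  fixes h :: "'a::euclidean_space \<Rightarrow> real"
  assumes hi: "integrable lebesgue h"
    and hb: "\<And>a b. (LINT x|lebesgue. h x * indicator (box a b) x) = 0"
  shows "AE x in lebesgue. h x = 0"
proof -
  have hm: "h \<in> borel_measurable (completion lborel)"
    using hi by (rule borel_measurable_integrable)
  obtain h' where h'm: "h' \<in> borel_measurable lborel" and ae: "AE x in lborel. h x = h' x"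
    using completion_ex_borel_measurable_real[OF hm] by blast
  have aeL: "AE x in lebesgue. h x = h' x" using AE_completion[OF ae] .
  have h'm': "h' \<in> borel_measurable borel" using h'm by simp
  have h'iL: "integrable lebesgue h'"
    by (rule integrable_cong_AE_imp[OF hi _ aeL]) (use h'm in \<open>auto intro: measurable_completion\<close>)
  have h'i: "integrable lborel h'"
    using h'iL integrable_completion[OF h'm] by simp
  have bx: "box a b \<in> sets lborel" for a b :: 'a by simp
  have box_eq: "(LINT x|lborel. h' x * indicator (box a b) x) = 0" for a b
  proof -
    have "(LINT x|lborel. h' x * indicator (box a b) x) = (LINT x|lebesgue. h' x * indicator (box a b) x)"
      by (rule integral_completion[symmetric]) (use h'm in simp)
    also have "\<dots> = (LINT x|lebesgue. h x * indicator (box a b) x)"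
    proof (rule integral_cong_AE)
      show "(\<lambda>x. h x * indicator (box a b) x) \<in> borel_measurable lebesgue"
        by (intro borel_measurable_times hm borel_measurable_indicator fmeasurableD lmeasurable_box)
    qed (use aeL h'm in \<open>auto intro: measurable_completion\<close>)
    finally show ?thesis using hb by simp
  qed
  have pn: "(\<integral>\<^sup>+x. ennreal (h' x * indicator (box a b) x) \<partial>lborel) =
            (\<integral>\<^sup>+x. ennreal (- (h' x * indicator (box a b) x)) \<partial>lborel)" for a b :: 'a
  proof -
    have ii: "integrable lborel (\<lambda>x. h' x * indicator (box a b) x)"
      using h'i bx by (rule integrable_real_mult_indicator[rotated])
    then have f1: "(\<integral>\<^sup>+x. ennreal (h' x * indicator (box a b) x) \<partial>lborel) \<noteq> \<infinity>"
      and f2: "(\<integral>\<^sup>+x. ennreal (- (h' x * indicator (box a b) x)) \<partial>lborel) \<noteq> \<infinity>"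
      unfolding real_integrable_def by auto
    have "enn2real (\<integral>\<^sup>+x. ennreal (h' x * indicator (box a b) x) \<partial>lborel) =
          enn2real (\<integral>\<^sup>+x. ennreal (- (h' x * indicator (box a b) x)) \<partial>lborel)"
      using real_lebesgue_integral_def[OF ii] box_eq[of a b] by simp
    moreover have "(\<integral>\<^sup>+x. ennreal (h' x * indicator (box a b) x) \<partial>lborel) = ennreal (enn2real (\<integral>\<^sup>+x. ennreal (h' x * indicator (box a b) x) \<partial>lborel))"
      using f1 by (simp add: less_top)
    moreover have "(\<integral>\<^sup>+x. ennreal (- (h' x * indicator (box a b) x)) \<partial>lborel) = ennreal (enn2real (\<integral>\<^sup>+x. ennreal (- (h' x * indicator (box a b) x)) \<partial>lborel))"
      using f2 by (simp add: less_top)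
    ultimately show ?thesis by metis
  qed
  define N1 where "N1 = density lborel (\<lambda>x. ennreal (h' x))"
  define N2 where "N2 = density lborel (\<lambda>x. ennreal (- h' x))"
  define E where "E = range (\<lambda>(a, b). box a b :: 'a set)"
  have fin1: "(\<integral>\<^sup>+x. ennreal (h' x) \<partial>lborel) \<noteq> \<infinity>"
    using h'i unfolding real_integrable_def by auto
  have "N1 = N2"
  proof (rule measure_eqI_generator_eq[where E=E and \<Omega>=UNIV and A="\<lambda>i. box (- real i *\<^sub>R One) (real i *\<^sub>R One)"])
    show "Int_stable E"
      unfolding E_def Int_stable_def by (auto simp: box_Int_box)
    show "E \<subseteq> Pow UNIV" by simp
    have sE: "sigma_sets UNIV E = sets borel"
      unfolding E_def borel_eq_box by simp
    show "sets N1 = sigma_sets UNIV E" unfolding N1_def sE by simp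
    show "sets N2 = sigma_sets UNIV E" unfolding N2_def sE by simp
    show "emeasure N1 X = emeasure N2 X" if "X \<in> E" for X
    proof -
      obtain a b where X: "X = box a b" using \<open>X \<in> E\<close> unfolding E_def by auto
      show ?thesis
        unfolding N1_def N2_def X
        using pn[of a b] h'm
        by (subst (1 2) emeasure_density) (auto simp: ennreal_ind2 ennreal_ind simp del: ennreal_neg)
    qed
    show "range (\<lambda>i. box (- real i *\<^sub>R One) (real i *\<^sub>R One)) \<subseteq> E"
      unfolding E_def by auto
    show "(\<Union>i. box (- real i *\<^sub>R One) (real i *\<^sub>R One)) = (UNIV :: 'a set)"
    proof (safe)
      fix x :: 'a
      obtain n :: nat where n: "norm x < real n" using reals_Archimedean2 by blast
      have "x \<in> box (- real n *\<^sub>R One) (real n *\<^sub>R One)"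
        unfolding mem_box
      proof (intro ballI conjI)
        fix i :: 'a assume i: "i \<in> Basis"
        have "\<bar>x \<bullet> i\<bar> \<le> norm x" using i by (rule Basis_le_norm)
        then show "(- real n *\<^sub>R One) \<bullet> i < x \<bullet> i" "x \<bullet> i < (real n *\<^sub>R One) \<bullet> i"
          using n i by (auto simp: inner_Basis)
      qed
      then show "x \<in> (\<Union>i. box (- real i *\<^sub>R One) (real i *\<^sub>R One))" by blast
    qed auto
    show "emeasure N1 (box (- real i *\<^sub>R One) (real i *\<^sub>R One)) \<noteq> \<infinity>" for i
    proof -
      have "emeasure N1 (box (- real i *\<^sub>R One) (real i *\<^sub>R One)) \<le> (\<integral>\<^sup>+x. ennreal (h' x) \<partial>lborel)"
        unfolding N1_def using h'm
        by (subst emeasure_density) (auto intro!: nn_integral_mono split: split_indicator)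
      then show ?thesis using fin1 by (metis infinity_ennreal_def neq_top_trans)
    qed
  qed
  then have "AE x in lborel. ennreal (h' x) = ennreal (- h' x)"
    unfolding N1_def N2_def
    by (intro sigma_finite_measure.density_unique[OF sigma_finite_lborel]) (use h'm in auto)
  then have "AE x in lborel. h' x = 0"
    by eventually_elim (rule ennreal_pm)
  with ae have "AE x in lborel. h x = 0" by eventually_elim simp
  then show ?thesis by (rule AE_completion)
qed

lemma FL_scalar:
  fixes g :: "real^'d \<Rightarrow> real"
  assumes Om: "open \<Omega>"
    and gi: "integrable (lebesgue_on \<Omega>) g"
    and T: "\<And>\<phi>. test_fun \<Omega> \<phi> \<Longrightarrow> (LINT x|lebesgue_on \<Omega>. g x * \<phi> x) = 0"
  shows "AE x in lebesgue_on \<Omega>. g x = 0"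
proof -
  have OmL: "\<Omega> \<in> sets lebesgue" using Om by (simp add: sets.Int_space_eq2 borel_open)
  define S where "S = {x \<in> \<Omega>. g x \<noteq> 0}"
  have "negligible S"
  proof (rule locally_negligible_alt[THEN iffD2], intro ballI)
    fix x assume "x \<in> S"
    then have "x \<in> \<Omega>" by (simp add: S_def)
    then obtain c d where cd: "cbox c d \<subseteq> \<Omega>" "x \<in> box c d" "\<forall>i\<in>Basis. c \<bullet> i < d \<bullet> i"
      by (rule open_contains_cbox[OF Om])
    define h where "h y = (if y \<in> \<Omega> then g y else 0) * indicator (box c d) y" for y
    have hi: "integrable lebesgue h"
      unfolding h_def
    proof (rule integrable_real_mult_indicator)
      show "box c d \<in> sets lebesgue" by (rule fmeasurableD[OF lmeasurable_box])
      show "integrable lebesgue (\<lambda>y. if y \<in> \<Omega> then g y else 0)"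
        using gi by (simp add: Lebesgue_Measure.integrable_restrict_UNIV[OF OmL])
    qed
    have hb: "(LINT y|lebesgue. h y * indicator (box a b) y) = 0" for a b
    proof -
      obtain a' b' where ab': "box c d \<inter> box a b = box a' b'"
        using box_Int_box[of c d a b] by blast
      have "(LINT y|lebesgue. h y * indicator (box a b) y) =
            (LINT y|lebesgue. (if y \<in> \<Omega> then g y * indicator (box a' b') y else 0))"
        by (rule Bochner_Integration.integral_cong) (auto simp: h_def ab'[symmetric] split: split_indicator)
      also have "\<dots> = (LINT y|lebesgue_on \<Omega>. g y * indicator (box a' b') y)"
        by (rule Lebesgue_Measure.integral_restrict_UNIV[OF OmL])
      also have "\<dots> = 0"
      proof (cases "box a' b' = {}")
        case True
        then show ?thesis by simp
      next
        case False
        have "cbox a' b' = closure (box a' b')" using False by simp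
        also have "\<dots> \<subseteq> closure (box c d)" using ab' by (intro closure_mono) blast
        also have "\<dots> \<subseteq> cbox c d" by (rule closure_minimal[OF box_subset_cbox closed_cbox])
        finally have sub: "cbox a' b' \<subseteq> \<Omega>" using cd by blast
        show ?thesis
          by (rule box_integral_zero[OF OmL gi T sub])
      qed
      finally show ?thesis .
    qed
    have "AE y in lebesgue. h y = 0"
      by (rule boxes_ae_zero[OF hi hb])
    then obtain N where N: "N \<in> null_sets lebesgue" "{y. h y \<noteq> 0} \<subseteq> N"
      by (auto simp: eventually_ae_filter)
    have "S \<inter> box c d \<subseteq> {y. h y \<noteq> 0}"
      by (auto simp: S_def h_def)
    then have "negligible (S \<inter> box c d)"
      using N negligible_iff_null_sets negligible_subset by blast
    moreover have "openin (top_of_set S) (S \<inter> box c d)"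
      by (rule openin_open_Int) (rule open_box)
    ultimately show "\<exists>U. openin (top_of_set S) U \<and> x \<in> U \<and> negligible U"
      using cd \<open>x \<in> S\<close> by blast
  qed
  then have "S \<in> null_sets lebesgue" by (simp add: negligible_iff_null_sets)
  then have "AE x in lebesgue. x \<notin> S" by (rule AE_not_in)
  then have "AE x in lebesgue. x \<in> \<Omega> \<longrightarrow> g x = 0"
    by eventually_elim (auto simp: S_def)
  then show ?thesis
    using OmL by (subst AE_restrict_space_iff) auto
qed

lemma FL:
  fixes w :: "real^'d \<Rightarrow> real^'d"
  assumes Om: "open \<Omega>" "bounded \<Omega>"
    and w: "w \<in> L2 \<Omega>"
    and wd: "is_wdiv \<Omega> (\<lambda>x. 0) w"
  shows "AE x in lebesgue_on \<Omega>. w x = 0"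
proof -
  have OmL: "\<Omega> \<in> lmeasurable" using Om by (simp add: lmeasurable_open)
  interpret finite_measure "lebesgue_on \<Omega>"
    using OmL by (rule finite_measure_lebesgue_on)
  have wm: "w \<in> borel_measurable (lebesgue_on \<Omega>)" and w2: "integrable (lebesgue_on \<Omega>) (\<lambda>x. (norm (w x))\<^sup>2)"
    using w by (auto simp: L2_def)
  have "AE x in lebesgue_on \<Omega>. w x $ i = 0" for i
  proof (rule FL_scalar[OF Om(1)])
    have gm: "(\<lambda>x. w x $ i) \<in> borel_measurable (lebesgue_on \<Omega>)"
      using measurable_compose[OF wm borel_measurable_nth] by simp
    show "integrable (lebesgue_on \<Omega>) (\<lambda>x. w x $ i)"
    proof (rule Bochner_Integration.integrable_bound[OF _ gm])
      show "integrable (lebesgue_on \<Omega>) (\<lambda>x. 1 + (norm (w x))\<^sup>2)"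
        using w2 by simp
      show "AE x in lebesgue_on \<Omega>. norm (w x $ i) \<le> norm (1 + (norm (w x))\<^sup>2)"
      proof (intro AE_I2)
        fix x
        have "\<bar>w x $ i\<bar> \<le> norm (w x)" by (rule component_le_norm_cart)
        also have "\<dots> \<le> 1 + (norm (w x))\<^sup>2"
        proof -
          have "0 \<le> (norm (w x) - 1)\<^sup>2" by simp
          then have "2 * norm (w x) \<le> 1 + (norm (w x))\<^sup>2"
            by (simp add: power2_eq_square algebra_simps)
          then show ?thesis using norm_ge_zero[of "w x"] by linarith
        qed
        finally show "norm (w x $ i) \<le> norm (1 + (norm (w x))\<^sup>2)" by simp
      qed
    qed
    fix \<phi> assume "test_fun \<Omega> \<phi>"
    then have "(LINT x|lebesgue_on \<Omega>. (\<Sum>j\<in>UNIV. (0::real^'d^'d) $ i $ j * pd j \<phi> x)) =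
      - (LINT x|lebesgue_on \<Omega>. w x $ i * \<phi> x)"
      using wd unfolding is_wdiv_def by blast
    then show "(LINT x|lebesgue_on \<Omega>. w x $ i * \<phi> x) = 0" by simp
  qed
  then have "AE x in lebesgue_on \<Omega>. \<forall>i. w x $ i = 0"
    by (rule eventually_all_finite)
  then show ?thesis
    by eventually_elim (simp add: vec_eq_iff)
qed

lemma wdiv_props:
  assumes "\<sigma> \<in> Hdiv \<Omega>"
  shows "wdiv \<Omega> \<sigma> \<in> L2 \<Omega>" "is_wdiv \<Omega> \<sigma> (wdiv \<Omega> \<sigma>)"
proof -
  have "\<exists>w. w \<in> L2 \<Omega> \<and> is_wdiv \<Omega> \<sigma> w" using assms by (auto simp: Hdiv_def)
  then have "wdiv \<Omega> \<sigma> \<in> L2 \<Omega> \<and> is_wdiv \<Omega> \<sigma> (wdiv \<Omega> \<sigma>)"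
    unfolding wdiv_def by (rule someI_ex)
  then show "wdiv \<Omega> \<sigma> \<in> L2 \<Omega>" "is_wdiv \<Omega> \<sigma> (wdiv \<Omega> \<sigma>)" by auto
qed

lemma L2ip_AE_zero_left:
  assumes "AE x in lebesgue_on \<Omega>. f x = 0"
  shows "L2ip \<Omega> f g = 0"
  unfolding L2ip_def by (rule integral_eq_zero_AE) (use assms in \<open>eventually_elim, simp\<close>)

lemma L2ip_self_zero:
  assumes "\<sigma> \<in> L2 \<Omega>" "L2ip \<Omega> \<sigma> \<sigma> = 0"
  shows "AE x in lebesgue_on \<Omega>. \<sigma> x = 0"
proof -
  have i: "integrable (lebesgue_on \<Omega>) (\<lambda>x. \<sigma> x \<bullet> \<sigma> x)"
    using assms(1) by (simp add: L2_def power2_norm_eq_inner)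
  have "(LINT x|lebesgue_on \<Omega>. \<sigma> x \<bullet> \<sigma> x) = 0" using assms(2) by (simp add: L2ip_def)
  then have "AE x in lebesgue_on \<Omega>. \<sigma> x \<bullet> \<sigma> x = 0"
    using integral_nonneg_eq_0_iff_AE[OF i] by simp
  then show ?thesis by eventually_elim simp
qed

lemma a_form_zero_left: "a_form \<Omega> \<mu> lam (\<lambda>x. 0) \<tau> = 0"
  by (simp add: a_form_def L2ip_def dev_def trace_def)

lemma Sigma_sym_Hdiv: "\<tau> \<in> Sigma_sym \<Omega> lam \<Longrightarrow> \<tau> \<in> Hdiv \<Omega>"
  by (simp add: Sigma_sym_def Sigma_full_def)

lemma Sigma_full_Hdiv: "\<tau> \<in> Sigma_full \<Omega> lam \<Longrightarrow> \<tau> \<in> Hdiv \<Omega>"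
  by (simp add: Sigma_full_def)

lemma Hdiv_L2: "\<tau> \<in> Hdiv \<Omega> \<Longrightarrow> \<tau> \<in> L2 \<Omega>"
  by (simp add: Hdiv_def)

lemma conclude_zero:
  assumes "\<alpha> > 0" "\<alpha> * (hdiv_norm \<Omega> \<sigma>)\<^sup>2 \<le> a_form \<Omega> \<mu> lam \<sigma> \<sigma>"
    and "a_form \<Omega> \<mu> lam \<sigma> \<sigma> = 0"
    and "AE x in lebesgue_on \<Omega>. wdiv \<Omega> \<sigma> x = 0"
    and "\<sigma> \<in> L2 \<Omega>"
  shows "AE x in lebesgue_on \<Omega>. \<sigma> x = 0"
proof -
  have "(hdiv_norm \<Omega> \<sigma>)\<^sup>2 \<le> 0"
    using assms(1-3) by (simp add: mult_le_0_iff)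
  then have "hdiv_norm \<Omega> \<sigma> = 0" by simp
  moreover have "L2ip \<Omega> (wdiv \<Omega> \<sigma>) (wdiv \<Omega> \<sigma>) = 0"
    by (rule L2ip_AE_zero_left[OF assms(4)])
  ultimately have "L2ip \<Omega> \<sigma> \<sigma> = 0" by (simp add: hdiv_norm_def)
  then show ?thesis by (rule L2ip_self_zero[OF assms(5)])
qed

lemma zero_data:
  fixes f :: "real^'d \<Rightarrow> real^'d"
  assumes Om: "open \<Omega>" "bounded \<Omega>"
    and cs: "cont_solves \<Omega> \<mu> lam f G F (\<lambda>x. 0) u"
  shows "\<And>v. v \<in> L2 \<Omega> \<Longrightarrow> L2ip \<Omega> f v = 0"
    and "\<And>\<tau>. \<tau> \<in> Sigma_sym \<Omega> lam \<Longrightarrow> AE x in lebesgue_on \<Omega>. wdiv \<Omega> \<tau> x = 0 \<Longrightarrow>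
             bdry_pair \<Omega> \<tau> G + L2ip \<Omega> F \<tau> = 0"
proof -
  have "(\<lambda>x. 0) \<in> Hdiv \<Omega>" using cs by (auto simp: cont_solves_def intro: Sigma_sym_Hdiv)
  note wp = wdiv_props[OF this]
  have ae0: "AE x in lebesgue_on \<Omega>. wdiv \<Omega> (\<lambda>x. 0) x = 0"
    by (rule FL[OF Om wp])
  fix v :: "real^'d \<Rightarrow> real^'d" assume "v \<in> L2 \<Omega>"
  then have "b_form \<Omega> (\<lambda>x. 0) v = L2ip \<Omega> f v" using cs by (simp add: cont_solves_def)
  then show "L2ip \<Omega> f v = 0"
    using L2ip_AE_zero_left[OF ae0] by (simp add: b_form_def)
next
  fix \<tau> assume t: "\<tau> \<in> Sigma_sym \<Omega> lam" and ae: "AE x in lebesgue_on \<Omega>. wdiv \<Omega> \<tau> x = 0"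
  have "a_form \<Omega> \<mu> lam (\<lambda>x. 0) \<tau> + b_form \<Omega> \<tau> u = bdry_pair \<Omega> \<tau> G + L2ip \<Omega> F \<tau>"
    using cs t by (simp add: cont_solves_def)
  then show "bdry_pair \<Omega> \<tau> G + L2ip \<Omega> F \<tau> = 0"
    using L2ip_AE_zero_left[OF ae] by (simp add: a_form_zero_left b_form_def)
qed

theorem theorem4p5:
  fixes \<Omega> :: "(real^'d) set" and \<mu> :: real and lam :: ereal
    and Ssym :: "(real^'d \<Rightarrow> real^'d^'d) set" and Vs :: "(real^'d \<Rightarrow> real^'d) set"
    and Sw :: "(real^'d \<Rightarrow> real^'d^'d) set" and Vw :: "(real^'d \<Rightarrow> real^'d) set"
    and Xw :: "(real^'d \<Rightarrow> real^'d^'d) set"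
  assumes dim: "CARD('d) = 2 \<or> CARD('d) = 3"
    and dom: "lipschitz_domain \<Omega>" "polyhedral_domain \<Omega>"
    and mu: "\<mu> > 0" and lam: "lam \<ge> 0"
  shows
   "(fin_dim_space Ssym \<and> Ssym \<subseteq> Sigma_sym \<Omega> lam \<and> fin_dim_space Vs \<and> Vs \<subseteq> L2 \<Omega> \<and>
     strong_BB \<Omega> \<mu> lam Ssym Vs \<and>
     {\<tau> \<in> Ssym. \<forall>v \<in> Vs. L2ip \<Omega> (wdiv \<Omega> \<tau>) v = 0}
        \<subseteq> {\<tau> \<in> Sigma_sym \<Omega> lam. AE x in lebesgue_on \<Omega>. wdiv \<Omega> \<tau> x = 0}
     \<longrightarrow> strong_material_robust \<Omega> \<mu> lam Ssym Vs)
  \<and> (fin_dim_space Sw \<and> Sw \<subseteq> Sigma_full \<Omega> lam \<and> fin_dim_space Vw \<and> Vw \<subseteq> L2 \<Omega> \<and>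
     fin_dim_space Xw \<and> Xw \<subseteq> Xi \<Omega> \<and>
     weak_BB \<Omega> \<mu> lam Sw Vw Xw \<and>
     {\<tau> \<in> Sw. \<forall>v \<in> Vw. \<forall>\<xi> \<in> Xw. L2ip \<Omega> (wdiv \<Omega> \<tau>) v + L2ip \<Omega> \<tau> \<xi> = 0}
        \<subseteq> {\<tau> \<in> Sigma_sym \<Omega> lam. AE x in lebesgue_on \<Omega>. wdiv \<Omega> \<tau> x = 0}
     \<longrightarrow> weak_material_robust \<Omega> \<mu> lam Sw Vw Xw)"
proof -
  have Om: "open \<Omega>" "bounded \<Omega>" using dom(1) unfolding lipschitz_domain_def by auto
  show ?thesis
  proof (intro conjI impI)
    assume H: "fin_dim_space Ssym \<and> Ssym \<subseteq> Sigma_sym \<Omega> lam \<and> fin_dim_space Vs \<and> Vs \<subseteq> L2 \<Omega> \<and>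
     strong_BB \<Omega> \<mu> lam Ssym Vs \<and>
     {\<tau> \<in> Ssym. \<forall>v \<in> Vs. L2ip \<Omega> (wdiv \<Omega> \<tau>) v = 0}
        \<subseteq> {\<tau> \<in> Sigma_sym \<Omega> lam. AE x in lebesgue_on \<Omega>. wdiv \<Omega> \<tau> x = 0}"
    then have Ss: "Ssym \<subseteq> Sigma_sym \<Omega> lam" and Vs: "Vs \<subseteq> L2 \<Omega>" and BB: "strong_BB \<Omega> \<mu> lam Ssym Vs"
      and K: "{\<tau> \<in> Ssym. \<forall>v \<in> Vs. L2ip \<Omega> (wdiv \<Omega> \<tau>) v = 0}
        \<subseteq> {\<tau> \<in> Sigma_sym \<Omega> lam. AE x in lebesgue_on \<Omega>. wdiv \<Omega> \<tau> x = 0}" by auto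
    obtain \<alpha> where al: "\<alpha> > 0" and coer: "\<And>\<tau>. \<tau> \<in> Ssym \<Longrightarrow> (\<forall>v\<in>Vs. b_form \<Omega> \<tau> v = 0) \<Longrightarrow>
                   a_form \<Omega> \<mu> lam \<tau> \<tau> \<ge> \<alpha> * (hdiv_norm \<Omega> \<tau>)\<^sup>2"
      using BB unfolding strong_BB_def by blast
    show "strong_material_robust \<Omega> \<mu> lam Ssym Vs"
      unfolding strong_material_robust_def
    proof (intro allI impI)
      fix f G F \<sigma>h uh
      assume A: "data_ok \<Omega> lam f G F \<and> (\<exists>u. cont_solves \<Omega> \<mu> lam f G F (\<lambda>x. 0) u)"
        and D: "strong_disc_solves \<Omega> \<mu> lam Ssym Vs f G F \<sigma>h uh"
      obtain u where cs: "cont_solves \<Omega> \<mu> lam f G F (\<lambda>x. 0) u" using A by blast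
      note z = zero_data[OF Om cs]
      have sh: "\<sigma>h \<in> Ssym" using D by (simp add: strong_disc_solves_def)
      have b0: "\<forall>v\<in>Vs. b_form \<Omega> \<sigma>h v = 0"
        using D z(1) Vs by (auto simp: strong_disc_solves_def)
      then have "\<sigma>h \<in> {\<tau> \<in> Ssym. \<forall>v \<in> Vs. L2ip \<Omega> (wdiv \<Omega> \<tau>) v = 0}"
        using sh by (simp add: b_form_def)
      with K have ss: "\<sigma>h \<in> Sigma_sym \<Omega> lam" and ae: "AE x in lebesgue_on \<Omega>. wdiv \<Omega> \<sigma>h x = 0"
        by blast+
      have r0: "bdry_pair \<Omega> \<sigma>h G + L2ip \<Omega> F \<sigma>h = 0" by (rule z(2)[OF ss ae])
      have "a_form \<Omega> \<mu> lam \<sigma>h \<sigma>h + b_form \<Omega> \<sigma>h uh = bdry_pair \<Omega> \<sigma>h G + L2ip \<Omega> F \<sigma>h"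
        using D sh unfolding strong_disc_solves_def by blast
      then have a0: "a_form \<Omega> \<mu> lam \<sigma>h \<sigma>h = 0"
        using r0 L2ip_AE_zero_left[OF ae] by (simp add: b_form_def)
      show "AE x in lebesgue_on \<Omega>. \<sigma>h x = 0"
        by (rule conclude_zero[OF al coer[OF sh b0] a0 ae Hdiv_L2[OF Sigma_sym_Hdiv[OF ss]]])
    qed
  next
    assume H: "fin_dim_space Sw \<and> Sw \<subseteq> Sigma_full \<Omega> lam \<and> fin_dim_space Vw \<and> Vw \<subseteq> L2 \<Omega> \<and>
     fin_dim_space Xw \<and> Xw \<subseteq> Xi \<Omega> \<and>
     weak_BB \<Omega> \<mu> lam Sw Vw Xw \<and>
     {\<tau> \<in> Sw. \<forall>v \<in> Vw. \<forall>\<xi> \<in> Xw. L2ip \<Omega> (wdiv \<Omega> \<tau>) v + L2ip \<Omega> \<tau> \<xi> = 0}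
        \<subseteq> {\<tau> \<in> Sigma_sym \<Omega> lam. AE x in lebesgue_on \<Omega>. wdiv \<Omega> \<tau> x = 0}"
    then have Vw: "Vw \<subseteq> L2 \<Omega>" and BB: "weak_BB \<Omega> \<mu> lam Sw Vw Xw"
      and K: "{\<tau> \<in> Sw. \<forall>v \<in> Vw. \<forall>\<xi> \<in> Xw. L2ip \<Omega> (wdiv \<Omega> \<tau>) v + L2ip \<Omega> \<tau> \<xi> = 0}
        \<subseteq> {\<tau> \<in> Sigma_sym \<Omega> lam. AE x in lebesgue_on \<Omega>. wdiv \<Omega> \<tau> x = 0}" by auto
    obtain \<alpha> where al: "\<alpha> > 0" and coer: "\<And>\<tau>. \<tau> \<in> Sw \<Longrightarrow> (\<forall>v\<in>Vw. \<forall>\<xi>\<in>Xw. b_form \<Omega> \<tau> v + c_form \<Omega> \<tau> \<xi> = 0) \<Longrightarrow>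
                   a_form \<Omega> \<mu> lam \<tau> \<tau> \<ge> \<alpha> * (hdiv_norm \<Omega> \<tau>)\<^sup>2"
      using BB unfolding weak_BB_def by blast
    show "weak_material_robust \<Omega> \<mu> lam Sw Vw Xw"
      unfolding weak_material_robust_def
    proof (intro allI impI)
      fix f G F \<sigma>h uh \<omega>h
      assume A: "data_ok \<Omega> lam f G F \<and> (\<exists>u. cont_solves \<Omega> \<mu> lam f G F (\<lambda>x. 0) u)"
        and D: "weak_disc_solves \<Omega> \<mu> lam Sw Vw Xw f G F \<sigma>h uh \<omega>h"
      obtain u where cs: "cont_solves \<Omega> \<mu> lam f G F (\<lambda>x. 0) u" using A by blast
      note z = zero_data[OF Om cs]
      have sh: "\<sigma>h \<in> Sw" and oh: "\<omega>h \<in> Xw" using D by (simp_all add: weak_disc_solves_def)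
      have b0: "\<forall>v\<in>Vw. b_form \<Omega> \<sigma>h v = 0"
        using D z(1) Vw by (auto simp: weak_disc_solves_def)
      have c0: "\<forall>\<xi>\<in>Xw. c_form \<Omega> \<sigma>h \<xi> = 0"
        using D by (auto simp: weak_disc_solves_def)
      have bc0: "\<forall>v\<in>Vw. \<forall>\<xi>\<in>Xw. b_form \<Omega> \<sigma>h v + c_form \<Omega> \<sigma>h \<xi> = 0"
        using b0 c0 by simp
      then have "\<sigma>h \<in> {\<tau> \<in> Sw. \<forall>v \<in> Vw. \<forall>\<xi> \<in> Xw. L2ip \<Omega> (wdiv \<Omega> \<tau>) v + L2ip \<Omega> \<tau> \<xi> = 0}"
        using sh by (simp add: b_form_def c_form_def)
      with K have ss: "\<sigma>h \<in> Sigma_sym \<Omega> lam" and ae: "AE x in lebesgue_on \<Omega>. wdiv \<Omega> \<sigma>h x = 0"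
        by blast+
      have r0: "bdry_pair \<Omega> \<sigma>h G + L2ip \<Omega> F \<sigma>h = 0" by (rule z(2)[OF ss ae])
      have "a_form \<Omega> \<mu> lam \<sigma>h \<sigma>h + b_form \<Omega> \<sigma>h uh + c_form \<Omega> \<sigma>h \<omega>h = bdry_pair \<Omega> \<sigma>h G + L2ip \<Omega> F \<sigma>h"
        using D sh unfolding weak_disc_solves_def by blast
      then have a0: "a_form \<Omega> \<mu> lam \<sigma>h \<sigma>h = 0"
        using r0 L2ip_AE_zero_left[OF ae] c0 oh by (simp add: b_form_def)
      show "AE x in lebesgue_on \<Omega>. \<sigma>h x = 0"
        by (rule conclude_zero[OF al coer[OF sh bc0] a0 ae Hdiv_L2[OF Sigma_sym_Hdiv[OF ss]]])
    qed
  qed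
qed

end
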